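(* Let $X_1,\dots,X_n$ be (possibly dependent) component lifetimes identically distributed as $X$, let $\tau(\mathbf X)$ be the lifetime of a coherent system with these components and domination function $h$, i.e. $\bar F_{\tau(\mathbf X)}(x)=h(\bar F_X(x))$, and let $H(p)=ph'(p)/h(p)$, $p\in(0,1)$. For $t\ge0$, let $(\tau(\mathbf X))_t=(\tau(\mathbf X)-t\mid\tau(\mathbf X)>t)$, and let $\tau(\mathbf X_t)$ be the lifetime of the coherent system with the same structure built from the used components $(X_i)_t=(X_i-t\mid X_i>t)$, with reliability $\bar F_{\tau(\mathbf X_t)}(x)=h\big(\bar F_X(t+x)/\bar F_X(t)\big)$. If $(1-p)H'(p)/H(p)$ is decreasing and non-positive in $p\in(0,1)$, then for any fixed $t\ge0$, $\tau(\mathbf X_t)\underset{c}{\prec}(\tau(\mathbf X))_t$.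
   Context: All random variables are non-negative and absolutely continuous with support $[0,\infty)$. For a random variable $W$: density $f_W$, survival $\bar F_W$, hazard rate $r_W=f_W/\bar F_W$. $U\underset{c}{\prec}V$ means $r_U(x)/r_V(x)$ is increasing (non-decreasing) in $x\ge0$. The domination function $h:[0,1]\to[0,1]$ is increasing, continuous, $h(0)=0$, $h(1)=1$, assumed differentiable as needed. "Decreasing" means non-increasing; "negative" in the paper means non-positive. *)

theory Defs
  imports "HOL-Analysis.Analysis"
begin

definition hazard :: "(real \<Rightarrow> real) \<Rightarrow> real \<Rightarrow> real" where
  "hazard S x = - vector_derivative S (at x within {0..}) / S x"

definition c_order :: "(real \<Rightarrow> real) \<Rightarrow> (real \<Rightarrow> real) \<Rightarrow> bool" where
  "c_order SU SV \<longleftrightarrow> mono_on {0..} (\<lambda>x. hazard SU x / hazard SV x)"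

end

theory Submission imports Defs begin

lemma nb: assumes "(x::real) \<ge> 0" shows "at x within {0..} \<noteq> bot"
proof
  assume a: "at x within {0..} = bot"
  have "at x within {x..x+1} \<le> at x within {0..}" using assms by (intro at_le) auto
  hence "at x within {x..x+1} = bot" using a le_bot by metis
  moreover have "at x within {x..x+1} = at_right x" by (rule at_within_Icc_at_right) simp
  ultimately show False using trivial_limit_at_right_real by simp
qed

lemma nb2: "(x::real) \<in> {0<..1} \<Longrightarrow> at x within {0..1} \<noteq> bot"
  by (metis (no_types, opaque_lifting) atLeastatMost_subset_iff at_le
    at_within_Icc_at_left bot.extremum dual_order.eq_iff
    greaterThanAtMost_iff trivial_limit_at_left_real)

theorem proposition5p1:
  fixes h h' H H' :: "real \<Rightarrow> real"
    and F f :: "real \<Rightarrow> real"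
    and t :: real
  assumes h_cont: "continuous_on {0..1} h"
    and h_mono: "mono_on {0..1} h"
    and h0: "h 0 = 0" and h1: "h 1 = 1"
    and h_deriv: "\<And>p. p \<in> {0<..1} \<Longrightarrow> (h has_real_derivative h' p) (at p within {0..1})"
    and H_def: "H = (\<lambda>p. p * h' p / h p)"
    and H_deriv: "\<And>p. p \<in> {0<..<1} \<Longrightarrow> (H has_real_derivative H' p) (at p)"
    and H_nz: "\<And>p. p \<in> {0<..<1} \<Longrightarrow> H p \<noteq> 0"
    and cond_dec: "antimono_on {0<..<1} (\<lambda>p. (1 - p) * H' p / H p)"
    and cond_nonpos: "\<And>p. p \<in> {0<..<1} \<Longrightarrow> (1 - p) * H' p / H p \<le> 0"
    and F0: "F 0 = 1"
    and F_pos: "\<And>x. x \<ge> 0 \<Longrightarrow> F x > 0"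
    and F_deriv: "\<And>x. x \<ge> 0 \<Longrightarrow> (F has_real_derivative - f x) (at x within {0..})"
    and f_pos: "\<And>x. x > 0 \<Longrightarrow> f x > 0"
    and F_lim: "(F \<longlongrightarrow> 0) at_top"
    and t_nonneg: "t \<ge> 0"
  shows "c_order (\<lambda>x. h (F (t + x) / F t)) (\<lambda>x. h (F (t + x)) / h (F t))"
proof -
  have h_at: "(h has_real_derivative h' p) (at p)" if "0 < p" "p < 1" for p
  proof -
    have "at p within {0..1} = at p" using that by (intro at_within_Icc_at) auto
    thus ?thesis using h_deriv[of p] that by auto
  qed
  have hpos: "h p > 0" if "0 < p" "p \<le> 1" for p
  proof (cases "p = 1")
    case True thus ?thesis using h1 by simp
  next
    case False
    hence p1: "p < 1" using that by simp
    have "h 0 \<le> h p" using h_mono that by (auto intro: mono_onD)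
    hence "h p \<ge> 0" using h0 by simp
    moreover have "h p \<noteq> 0" using H_nz[of p] p1 that H_def by auto
    ultimately show ?thesis by simp
  qed
  have h'nn: "h' p \<ge> 0" if "0 < p" "p < 1" for p
  proof (rule ccontr)
    assume "\<not> h' p \<ge> 0"
    hence "h' p < 0" by simp
    from DERIV_neg_dec_left[OF h_at[OF that] this] obtain d where d: "d > 0"
      "\<And>s. s > 0 \<Longrightarrow> s < d \<Longrightarrow> h p < h (p - s)" by blast
    define s where "s = min (d/2) (p/2)"
    have "s > 0" "s < d" "s < p" using d that by (auto simp: s_def)
    hence "h p < h (p - s)" using d by blast
    moreover have "h (p - s) \<le> h p" using h_mono that \<open>s > 0\<close> \<open>s < p\<close>
      by (intro mono_onD[OF h_mono]) auto
    ultimately show False by simp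
  qed
  have Hpos: "H p > 0" if "0 < p" "p < 1" for p
  proof -
    have "H p \<ge> 0" using H_def h'nn[OF that] hpos[of p] that by auto
    thus ?thesis using H_nz[of p] that by force
  qed
  have F_at: "(F has_real_derivative - f x) (at x)" if "x > 0" for x
  proof -
    have "at x within {0..} = at x" using that by (intro at_within_interior) auto
    thus ?thesis using F_deriv[of x] that by auto
  qed
  have F_cont: "continuous_on {0..} F"
    using F_deriv by (auto simp: continuous_on_eq_continuous_within intro: DERIV_continuous)
  have F_dec: "F y < F x" if "0 \<le> x" "x < y" for x y
  proof (rule DERIV_neg_imp_decreasing_open[OF that(2)])
    fix z assume "x < z" "z < y"
    thus "\<exists>l. DERIV F z :> l \<and> l < 0" using F_at f_pos that by (intro exI[of _ "- f z"]) auto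
  next
    show "continuous_on {x..y} F" by (rule continuous_on_subset[OF F_cont]) (use that in auto)
  qed
  define q where "q = F t"
  have q_pos: "q > 0" using F_pos t_nonneg q_def by auto
  have q_le: "q \<le> 1"
    using F_dec[of 0 t] F0 t_nonneg q_def by (cases "t = 0") auto
  define R where "R = (\<lambda>p. H p / H (q * p))"
  have K1: "R b \<le> R a" if "q < 1" "0 < a" "a \<le> b" "b < 1" for a b
  proof -
    have "R b \<le> R a"
    proof (rule DERIV_nonpos_imp_nonincreasing[OF that(3)])
      fix x assume x: "a \<le> x" "x \<le> b"
      have x01: "0 < x" "x < 1" using x that by auto
      have qxx: "q * x \<le> x" by (rule mult_left_le_one_le) (use x01 q_pos q_le in auto)
      have qx01: "0 < q * x" "q * x < 1"
      proof -
        have "q * x \<le> x" by (rule mult_left_le_one_le) (use x01 q_pos q_le in auto)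
        thus "0 < q * x" "q * x < 1" using x01 q_pos by (simp, linarith)
      qed
      have d1: "DERIV H x :> H' x" using H_deriv x01 by auto
      have d2: "DERIV (\<lambda>x. H (q * x)) x :> H' (q * x) * q"
        by (rule DERIV_chain2[OF H_deriv]) (use qx01 in \<open>auto intro!: derivative_eq_intros\<close>)
      have dR: "DERIV R x :> (H' x * H (q*x) - H x * (H' (q*x) * q)) / (H (q*x) * H (q*x))"
        unfolding R_def by (rule DERIV_divide[OF d1 d2]) (use Hpos qx01 in force)
      define A where "A = H x"
      define B where "B = H (q*x)"
      define \<phi>1 where "\<phi>1 = (1 - x) * H' x / A"
      define \<phi>2 where "\<phi>2 = (1 - q*x) * H' (q*x) / B"
      have A: "A > 0" using Hpos x01 A_def by auto
      have B: "B > 0" using Hpos qx01 B_def by auto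
      have le12: "\<phi>1 \<le> \<phi>2"
        unfolding \<phi>1_def \<phi>2_def A_def B_def
        using x01 qx01 q_le q_pos
        using monotone_onD[OF cond_dec, of "q*x" x] \<open>q*x \<le> x\<close> by auto
      have np: "\<phi>1 \<le> 0" unfolding \<phi>1_def A_def using cond_nonpos x01 by auto
      have e1: "H' x = \<phi>1 * A / (1 - x)" using A x01 by (simp add: \<phi>1_def)
      have e2: "H' (q*x) = \<phi>2 * B / (1 - q*x)" using B qx01 by (simp add: \<phi>2_def)
      have c1: "q / (1 - q*x) \<le> 1 / (1 - x)"
      proof -
        have p1: "1 - q*x > 0" "1 - x > 0" using x01 qx01 by auto
        have "q * (1 - x) \<le> 1 - q*x" using q_le by (simp add: algebra_simps)
        thus ?thesis using p1 by (simp add: divide_simps)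
      qed
      have s1: "\<phi>1 / (1 - x) \<le> q * \<phi>1 / (1 - q*x)"
      proof -
        have "\<phi>1 * (1 / (1 - x)) \<le> \<phi>1 * (q / (1 - q*x))"
          using c1 np by (rule mult_left_mono_neg)
        thus ?thesis by (simp add: mult.commute)
      qed
      have s2: "q * \<phi>1 / (1 - q*x) \<le> q * \<phi>2 / (1 - q*x)"
        using le12 q_pos qx01 by (intro divide_right_mono mult_left_mono) auto
      have key: "H' x \<le> q * H' (q*x) / B * A"
      proof -
        have "H' x = (\<phi>1 / (1 - x)) * A" using e1 by simp
        also have "\<dots> \<le> (q * \<phi>2 / (1 - q*x)) * A" using s1 s2 A by (intro mult_right_mono) auto
        also have "\<dots> = q * H' (q*x) / B * A" by (subst e2) (use B qx01 in \<open>simp add: field_simps\<close>)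
        finally show ?thesis .
      qed
      have "H' x * B \<le> A * (H' (q*x) * q)"
        using mult_right_mono[OF key, of B] B by (simp add: field_simps)
      hence "(H' x * H (q*x) - H x * (H' (q*x) * q)) / (H (q*x) * H (q*x)) \<le> 0"
        unfolding A_def B_def by (intro divide_nonpos_nonneg) auto
      thus "\<exists>y. DERIV R x :> y \<and> y \<le> 0" using dR by blast
    qed
    thus ?thesis .
  qed
  have K2: "R 1 \<le> R a" if q1: "q < 1" and a: "0 < a" "a < 1" for a
  proof -
    define c where "c = R a"
    have q01: "0 < q" "q < 1" using q_pos q1 by auto
    have qlt: "0 < q * p" "q * p < 1" if "0 < p" "p < 1" for p
    proof -
      have "q * p \<le> p" by (rule mult_left_le_one_le) (use that q_pos q_le in auto)
      thus "0 < q * p" "q * p < 1" using that q_pos by (simp, linarith)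
    qed
    have c_pos: "c > 0" using Hpos[OF a] Hpos[OF qlt[OF a]] unfolding c_def R_def by simp
    define G where "G = (\<lambda>p. c * H (q*p) * h p / p)"
    have hG: "h' p \<le> G p" if p: "a < p" "p < 1" for p
    proof -
      have p0: "0 < p" using p a by simp
      have "R p \<le> c" unfolding c_def using K1[OF q1 a(1)] p by auto
      hence "H p \<le> c * H (q*p)" using Hpos[OF qlt[OF p0 p(2)]] unfolding R_def
        by (simp add: pos_divide_le_eq)
      hence "p * h' p / h p \<le> c * H (q*p)" using H_def by simp
      hence "p * h' p \<le> c * H (q*p) * h p" using hpos[of p] p0 p by (simp add: pos_divide_le_eq)
      hence "h' p * p \<le> c * H (q*p) * h p" by (simp add: mult.commute)
      thus ?thesis unfolding G_def using p0 by (simp add: pos_le_divide_eq)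
    qed
    have Hc: "isCont H q" using H_deriv[of q] q01 by (auto intro: DERIV_isCont)
    have t1: "((\<lambda>p. H (q*p)) \<longlongrightarrow> H q) (at 1 within {0..1})"
    proof -
      have "((\<lambda>p. q*p) \<longlongrightarrow> q*1) (at 1 within {0..1})" by (intro tendsto_intros)
      hence "((\<lambda>p. q*p) \<longlongrightarrow> q) (at 1 within {0..1})" by simp
      from isCont_tendsto_compose[OF Hc this] show ?thesis .
    qed
    have t2: "(h \<longlongrightarrow> h 1) (at 1 within {0..1})" using h_cont by (simp add: continuous_on_def)
    have tG: "(G \<longlongrightarrow> G 1) (at 1 within {0..1})"
    proof -
      have "((\<lambda>p. c * H (q*p) * h p / p) \<longlongrightarrow> c * H q * h 1 / 1) (at 1 within {0..1})"
        by (intro tendsto_intros t1 t2) auto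
      thus ?thesis unfolding G_def by simp
    qed
    have G1: "G 1 = c * H q" unfolding G_def using h1 by simp
    have Q: "((\<lambda>p. (h p - h 1) / (p - 1)) \<longlongrightarrow> h' 1) (at 1 within {0..1})"
      using h_deriv[of 1] by (simp add: has_field_derivative_iff)
    have main: "h' 1 \<le> G 1 + e" if e: "e > 0" for e
    proof -
      have "eventually (\<lambda>p. dist (G p) (G 1) < e) (at 1 within {0..1})"
        using tG e by (simp add: tendsto_iff)
      then obtain d where d: "d > 0"
        "\<And>p. p \<in> {0..1} \<Longrightarrow> p \<noteq> 1 \<Longrightarrow> dist p 1 < d \<Longrightarrow> dist (G p) (G 1) < e"
        unfolding eventually_at by blast
      have ev: "eventually (\<lambda>p. (h p - h 1) / (p - 1) \<le> G 1 + e) (at 1 within {0..1})"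
        unfolding eventually_at
      proof (intro exI[of _ "min d (1 - a)"] conjI ballI impI)
        show "min d (1 - a) > 0" using d a by simp
        fix p :: real assume p: "p \<in> {0..1}" "p \<noteq> 1 \<and> dist p 1 < min d (1 - a)"
        have p1: "p < 1" "a < p" "1 - p < d" using p by (auto simp: dist_real_def)
        have "\<exists>l z. p < z \<and> z < 1 \<and> DERIV h z :> l \<and> h 1 - h p = (1 - p) * l"
        proof (rule MVT)
          show "p < 1" by fact
          show "continuous_on {p..1} h" by (rule continuous_on_subset[OF h_cont]) (use p1 a in auto)
          fix z assume "p < z" "z < 1"
          thus "h differentiable (at z)" using h_at[of z] p1 a by (auto simp: real_differentiable_def)
        qed
        then obtain l z where z: "p < z" "z < 1" "DERIV h z :> l" "h 1 - h p = (1 - p) * l" by blast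
        have z0: "0 < z" using z p1 a by simp
        have lz: "l = h' z" using DERIV_unique[OF z(3) h_at[OF z0 z(2)]] .
        have "(h p - h 1) / (p - 1) = l" using z(4) p1 by (simp add: field_simps)
        also have "\<dots> = h' z" by (rule lz)
        also have "\<dots> \<le> G z" using hG[of z] z p1 by simp
        also have "\<dots> < G 1 + e" using d(2)[of z] z p1 z0 by (auto simp: dist_real_def)
        finally show "(h p - h 1) / (p - 1) \<le> G 1 + e" by simp
      qed
      show ?thesis by (rule tendsto_upperbound[OF Q ev]) (use nb2[of 1] in simp)
    qed
    have "h' 1 \<le> G 1" using main by (rule field_le_epsilon)
    hence "H 1 \<le> c * H q" using G1 H_def h1 by simp
    moreover have "H q > 0" using Hpos q01 by auto
    moreover have "R 1 = H 1 / H q" unfolding R_def by simp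
    ultimately show ?thesis unfolding c_def[symmetric] by (simp add: pos_divide_le_eq)
  qed
  have K: "R b \<le> R a" if "0 < a" "a < b" "b \<le> 1" for a b
  proof (cases "q = 1")
    case True
    have "R a = 1" using True Hpos[of a] that unfolding R_def by simp
    moreover have "R b \<le> 1" using True unfolding R_def by (cases "H b = 0") auto
    ultimately show ?thesis by simp
  next
    case False
    hence q1: "q < 1" using q_le by simp
    show ?thesis
    proof (cases "b = 1")
      case True thus ?thesis using K2[OF q1] that by auto
    next
      case False thus ?thesis using K1[OF q1] that by auto
    qed
  qed
  define P where "P = (\<lambda>x. F (t + x) / q)"
  have Fr: "0 < F (t + x) \<and> F (t + x) \<le> q" if "x \<ge> 0" for x
  proof -
    have "F (t + x) \<le> F t" using F_dec[of t "t + x"] t_nonneg that by (cases "x = 0") auto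
    thus ?thesis using F_pos[of "t + x"] t_nonneg that q_def by auto
  qed
  have Fr1: "F (t + x) \<in> {0<..1}" if "x \<ge> 0" for x using Fr[OF that] q_le by auto
  have P01: "P x \<in> {0<..1}" if "x \<ge> 0" for x
    using Fr[OF that] q_pos unfolding P_def by (auto simp: divide_simps)
  have P1: "P x < 1" if "x > 0" for x
    using F_dec[of t "t + x"] t_nonneg that q_pos q_def unfolding P_def by (auto simp: divide_simps)
  have Pdec: "P y < P x" if "0 \<le> x" "x < y" for x y
    using F_dec[of "t + x" "t + y"] t_nonneg that q_pos unfolding P_def by (auto simp: divide_simps)
  have FP: "F (t + x) = q * P x" for x unfolding P_def using q_pos by simp
  have Fs_deriv: "((\<lambda>x. F (t + x)) has_real_derivative - f (t + x)) (at x within {0..})" if "x \<ge> 0" for x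
  proof -
    have "(F \<circ> (\<lambda>x. t + x) has_real_derivative - f (t + x) * 1) (at x within {0..})"
    proof (rule DERIV_image_chain)
      show "(F has_real_derivative - f (t + x)) (at (t + x) within (\<lambda>x. t + x) ` {0..})"
        by (rule has_field_derivative_subset[OF F_deriv]) (use that t_nonneg in auto)
      show "((\<lambda>x. t + x) has_real_derivative 1) (at x within {0..})" by (auto intro!: derivative_eq_intros)
    qed
    thus ?thesis by (simp add: o_def)
  qed
  have S1d: "((\<lambda>x. h (F (t + x) / F t)) has_real_derivative h' (P x) * (- f (t + x) / q)) (at x within {0..})"
    if x: "x \<ge> 0" for x
  proof -
    have "(h \<circ> P has_real_derivative h' (P x) * (- f (t + x) / q)) (at x within {0..})"
    proof (rule DERIV_image_chain)
      show "(h has_real_derivative h' (P x)) (at (P x) within P ` {0..})"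
        by (rule has_field_derivative_subset[OF h_deriv]) (use P01 x in force)+
      show "(P has_real_derivative - f (t + x) / q) (at x within {0..})"
        unfolding P_def by (rule DERIV_cdivide[OF Fs_deriv[OF x]])
    qed
    thus ?thesis by (simp add: o_def P_def q_def)
  qed
  have hq: "h q > 0" using hpos q_pos q_le by auto
  have S2d: "((\<lambda>x. h (F (t + x)) / h (F t)) has_real_derivative h' (F (t + x)) * (- f (t + x)) / h q) (at x within {0..})"
    if x: "x \<ge> 0" for x
  proof -
    have "(h \<circ> (\<lambda>x. F (t + x)) has_real_derivative h' (F (t + x)) * (- f (t + x))) (at x within {0..})"
    proof (rule DERIV_image_chain)
      show "(h has_real_derivative h' (F (t + x))) (at (F (t + x)) within (\<lambda>x. F (t + x)) ` {0..})"
        by (rule has_field_derivative_subset[OF h_deriv]) (use Fr1 x in force)+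
      show "((\<lambda>x. F (t + x)) has_real_derivative - f (t + x)) (at x within {0..})"
        by (rule Fs_deriv[OF x])
    qed
    from DERIV_cdivide[OF this, of "h q"] show ?thesis by (simp add: o_def q_def)
  qed
  have hz1: "hazard (\<lambda>x. h (F (t + x) / F t)) x = h' (P x) * f (t + x) / q / h (P x)" if "x \<ge> 0" for x
    unfolding hazard_def
    using vector_derivative_within[OF nb[OF that] S1d[OF that, unfolded has_real_derivative_iff_has_vector_derivative]]
    by (simp add: P_def q_def)
  have hz2: "hazard (\<lambda>x. h (F (t + x)) / h (F t)) x = h' (F (t + x)) * f (t + x) / h (F (t + x))" if "x \<ge> 0" for x
    unfolding hazard_def
    using vector_derivative_within[OF nb[OF that] S2d[OF that, unfolded has_real_derivative_iff_has_vector_derivative]]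
      hq by (simp add: q_def field_simps)
  define rat where "rat = (\<lambda>x. hazard (\<lambda>x. h (F (t + x) / F t)) x / hazard (\<lambda>x. h (F (t + x)) / h (F t)) x)"
  have rat0: "rat x = 0" if "x \<ge> 0" "f (t + x) = 0" for x
    unfolding rat_def using hz1[OF that(1)] that(2) by simp
  have ratR: "rat x = R (P x)" if x: "x \<ge> 0" and fx: "f (t + x) \<noteq> 0" for x
  proof -
    have p: "P x > 0" using P01[OF x] by auto
    have hp: "h (P x) > 0" using hpos P01[OF x] by auto
    have hu: "h (q * P x) > 0" using hpos Fr1[OF x] FP[of x] by auto
    have up: "q * P x > 0" using p q_pos by simp
    have e: "rat x = (h' (P x) * f (t + x) / q / h (P x)) / (h' (q * P x) * f (t + x) / h (q * P x))"
      unfolding rat_def hz1[OF x] hz2[OF x] FP[of x] ..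
    show ?thesis
    proof (cases "h' (q * P x) = 0")
      case True thus ?thesis unfolding e R_def H_def by simp
    next
      case False
      thus ?thesis unfolding e R_def H_def using p hp hu up q_pos fx
        by (simp add: field_simps)
    qed
  qed
  have Rpos: "R p > 0" if "0 < p" "p < 1" for p
  proof -
    have "q * p \<le> p" by (rule mult_left_le_one_le) (use that q_pos q_le in auto)
    hence "0 < q * p" "q * p < 1" using that q_pos by (simp, linarith)
    thus ?thesis using Hpos[OF that] Hpos unfolding R_def by simp
  qed
  show ?thesis unfolding c_order_def rat_def[symmetric]
  proof (rule mono_onI)
    fix x y :: real assume xy: "x \<in> {0..}" "y \<in> {0..}" "x \<le> y"
    show "rat x \<le> rat y"
    proof (cases "x = y")
      case True thus ?thesis by simp
    next
      case False
      hence xy': "0 \<le> x" "x < y" "0 < y" using xy by auto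
      have fy: "f (t + y) > 0" using f_pos t_nonneg xy' by auto
      have Py: "0 < P y" "P y < 1" using P01[of y] P1[of y] xy' by auto
      have ry: "rat y = R (P y)" using ratR[of y] xy' fy by simp
      show ?thesis
      proof (cases "f (t + x) = 0")
        case True thus ?thesis using rat0[of x] xy' ry Rpos[OF Py] by simp
      next
        case False
        have "rat x = R (P x)" using ratR[of x] xy' False by simp
        thus ?thesis using ry K[of "P y" "P x"] Py Pdec[OF xy'(1,2)] P01[of x] xy' by auto
      qed
    qed
  qed
qed

end
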